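(* Let $n\ge1$, $\pi\in\Pi_n$, and let $j$ be a closer or a transient of $\pi$. Then $$\mathrm{al}(\varphi(\pi);j)=\mathrm{al}(\pi;j),\qquad \mathrm{cr}(\varphi(\pi);j)=\mathrm{ne}(\pi;j),\qquad \mathrm{ne}(\varphi(\pi);j)=\mathrm{cr}(\pi;j),$$ where $\varphi:\Pi_n\to\Pi_n$ is the map described below. Construction of $\varphi(\pi)$: start with $V'=\emptyset$ and an empty edge set $E'$. For $i=1,\dots,n$: if $i$ is an opener of $\pi$, add $i$ to $V'$; if $i$ is a singleton of $\pi$, do nothing; if $i$ is a closer or transient of $\pi$, let $x$ be the $\gamma_i(\pi)$-th largest element of $V'$, add the edge $(x,i)$ to $E'$, remove $x$ from $V'$, and if $i$ is a transient of $\pi$ add $i$ to $V'$. Then $\varphi(\pi)$ is the partition of $[n]$ whose edge set is $E'$.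
   Context: A partition of $[n]=\{1,\dots,n\}$ is a set of pairwise disjoint nonempty subsets (blocks) whose union is $[n]$; $\Pi_n$ is the set of partitions of $[n]$. The edges of $\pi$ are the pairs $(i,j)$, $i<j$, with $i,j$ consecutive elements of the same block; $i$ is the left-hand and $j$ the right-hand endpoint. For a block $B$ with $|B|\ge2$, its minimum is an opener, its maximum a closer, its other elements transients; the element of a one-element block is a singleton. Two edges $e_1=(i_1,j_1)$, $e_2=(i_2,j_2)$ form a crossing with $e_1$ as initial edge if $i_1<i_2<j_1<j_2$; a nesting with $e_2$ as interior edge if $i_1<i_2<j_2<j_1$; an alignment with $e_1$ as initial edge if $i_1<j_1\le i_2<j_2$. For a closer or transient $j$ of $\pi$, $\mathrm{cr}(\pi;j)$ (resp. $\mathrm{ne}(\pi;j)$, $\mathrm{al}(\pi;j)$) is the number of crossings whose initial edge (resp. nestings whose interior edge, alignments whose initial edge) has $j$ as right-hand endpoint. For $i\in[n]$, the vacant vertices of $\pi$ before $i$ are the elements $x\le i-1$ that are the left endpoint of an edge $(x,y)$ of $\pi$ with $y\ge i$. For $i$ a closer or transient with edge $(j,i)$, $j<i$, $\gamma_i(\pi)$ is the rank of $j$ among the vacant vertices before $i$ in increasing order. (The construction of $\varphi$ is well defined and $\varphi(\pi)$ has the same closers and transients as $\pi$.) *)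

theory Defs
  imports Main "HOL-Library.Disjoint_Sets"
begin

text \<open>Set partitions of [n] = {1..n} are represented by 'partition_on {1..n} P'.\<close>

definition edges :: "nat set set \<Rightarrow> (nat \<times> nat) set" where
  "edges P = {(i, j). \<exists>B\<in>P. i \<in> B \<and> j \<in> B \<and> i < j \<and> (\<forall>k\<in>B. \<not> (i < k \<and> k < j))}"

definition opener :: "nat set set \<Rightarrow> nat \<Rightarrow> bool" where
  "opener P i \<longleftrightarrow> (\<exists>B\<in>P. 2 \<le> card B \<and> i = Min B)"

definition closer :: "nat set set \<Rightarrow> nat \<Rightarrow> bool" where
  "closer P i \<longleftrightarrow> (\<exists>B\<in>P. 2 \<le> card B \<and> i = Max B)"

definition transient :: "nat set set \<Rightarrow> nat \<Rightarrow> bool" where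
  "transient P i \<longleftrightarrow> (\<exists>B\<in>P. 2 \<le> card B \<and> i \<in> B \<and> i \<noteq> Min B \<and> i \<noteq> Max B)"

definition singleton_el :: "nat set set \<Rightarrow> nat \<Rightarrow> bool" where
  "singleton_el P i \<longleftrightarrow> {i} \<in> P"

definition cr :: "nat set set \<Rightarrow> nat \<Rightarrow> nat" where
  "cr P j = card {((i1, j1), (i2, j2)). (i1, j1) \<in> edges P \<and> (i2, j2) \<in> edges P \<and>
      j1 = j \<and> i1 < i2 \<and> i2 < j1 \<and> j1 < j2}"

definition ne :: "nat set set \<Rightarrow> nat \<Rightarrow> nat" where
  "ne P j = card {((i1, j1), (i2, j2)). (i1, j1) \<in> edges P \<and> (i2, j2) \<in> edges P \<and>
      j2 = j \<and> i1 < i2 \<and> i2 < j2 \<and> j2 < j1}"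

definition al :: "nat set set \<Rightarrow> nat \<Rightarrow> nat" where
  "al P j = card {((i1, j1), (i2, j2)). (i1, j1) \<in> edges P \<and> (i2, j2) \<in> edges P \<and>
      j1 = j \<and> i1 < j1 \<and> j1 \<le> i2 \<and> i2 < j2}"

definition vacant :: "nat set set \<Rightarrow> nat \<Rightarrow> nat set" where
  "vacant P i = {x. x \<le> i - 1 \<and> (\<exists>y. (x, y) \<in> edges P \<and> y \<ge> i)}"

definition left_end :: "nat set set \<Rightarrow> nat \<Rightarrow> nat" where
  "left_end P i = (THE j. (j, i) \<in> edges P)"

text \<open>gamma_i: rank (1-based, increasing order) of the left endpoint among the vacant vertices.\<close>
definition gamma :: "nat set set \<Rightarrow> nat \<Rightarrow> nat" where
  "gamma P i = (THE r. 1 \<le> r \<and> r \<le> card (vacant P i) \<and>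
      sorted_list_of_set (vacant P i) ! (r - 1) = left_end P i)"

fun phi_state :: "nat set set \<Rightarrow> nat \<Rightarrow> nat set \<times> (nat \<times> nat) set" where
  "phi_state P 0 = ({}, {})"
| "phi_state P (Suc i) =
     (let (V, E) = phi_state P i; m = Suc i in
      if opener P m then (insert m V, E)
      else if closer P m \<or> transient P m then
        (let x = rev (sorted_list_of_set V) ! (gamma P m - 1);
             V1 = V - {x} in
         (if transient P m then insert m V1 else V1, insert (x, m) E))
      else (V, E))"

definition partition_of_edges :: "nat \<Rightarrow> (nat \<times> nat) set \<Rightarrow> nat set set" where
  "partition_of_edges n E = {1..n} // ((E \<union> E\<inverse>)\<^sup>*)"

definition phi :: "nat \<Rightarrow> nat set set \<Rightarrow> nat set set" where
  "phi n P = partition_of_edges n (snd (phi_state P n))"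

end

theory Submission
  imports Defs
begin


lemma sl_less_iff:
  fixes S :: "nat set"
  assumes "finite S" "t < card S" "k < card S"
  shows "sorted_list_of_set S ! t < sorted_list_of_set S ! k \<longleftrightarrow> t < k"
proof -
  let ?s = "sorted_list_of_set S"
  have sw: "sorted_wrt (<) ?s" by (rule strict_sorted_list_of_set)
  have l: "length ?s = card S" by simp
  show ?thesis
  proof
    assume "?s ! t < ?s ! k"
    show "t < k"
    proof (rule ccontr)
      assume "\<not> t < k"
      then have "k = t \<or> k < t" by auto
      then show False
      proof
        assume "k < t" then have "?s ! k < ?s ! t" using sorted_wrt_nth_less[OF sw] assms l by auto
        then show False using \<open>?s ! t < ?s ! k\<close> by simp
      qed (use \<open>?s ! t < ?s ! k\<close> in simp)
    qed
  qed (use sorted_wrt_nth_less[OF sw] assms l in auto)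
qed

lemma rank_less:
  fixes S :: "nat set"
  assumes "finite S" "k < card S"
  shows "card {y\<in>S. y < sorted_list_of_set S ! k} = k"
proof -
  let ?s = "sorted_list_of_set S"
  have set: "set ?s = S" using assms by simp
  have eq: "{y\<in>S. y < ?s ! k} = (\<lambda>t. ?s ! t) ` {..<k}"
  proof
    show "{y\<in>S. y < ?s ! k} \<subseteq> (\<lambda>t. ?s ! t) ` {..<k}"
    proof
      fix y assume "y \<in> {y\<in>S. y < ?s ! k}"
      then have y: "y \<in> set ?s" "y < ?s ! k" using set by auto
      then obtain t where t: "t < card S" "y = ?s ! t" by (auto simp: in_set_conv_nth)
      then have "t < k" using sl_less_iff[OF assms(1) t(1) assms(2)] y by simp
      then show "y \<in> (\<lambda>t. ?s ! t) ` {..<k}" using t by auto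
    qed
  next
    show "(\<lambda>t. ?s ! t) ` {..<k} \<subseteq> {y\<in>S. y < ?s ! k}"
    proof
      fix y assume "y \<in> (\<lambda>t. ?s ! t) ` {..<k}"
      then obtain t where t: "t < k" "y = ?s ! t" by auto
      then have "t < card S" using assms by simp
      then have "y \<in> S" using t set nth_mem[of t ?s] by auto
      moreover have "y < ?s ! k" using sl_less_iff[OF assms(1) \<open>t < card S\<close> assms(2)] t by simp
      ultimately show "y \<in> {y\<in>S. y < ?s ! k}" by simp
    qed
  qed
  have "inj_on (\<lambda>t. ?s ! t) {..<k}"
    using assms by (auto simp: inj_on_def nth_eq_iff_index_eq)
  then show ?thesis unfolding eq by (simp add: card_image)
qed

lemma rank_greater:
  fixes S :: "nat set"
  assumes "finite S" "k < card S"
  shows "card {y\<in>S. sorted_list_of_set S ! k < y} = card S - Suc k"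
proof -
  let ?s = "sorted_list_of_set S"
  have set: "set ?s = S" using assms by simp
  have eq: "{y\<in>S. ?s ! k < y} = (\<lambda>t. ?s ! t) ` {k<..<card S}"
  proof
    show "{y\<in>S. ?s ! k < y} \<subseteq> (\<lambda>t. ?s ! t) ` {k<..<card S}"
    proof
      fix y assume "y \<in> {y\<in>S. ?s ! k < y}"
      then have y: "y \<in> set ?s" "?s ! k < y" using set by auto
      then obtain t where t: "t < card S" "y = ?s ! t" by (auto simp: in_set_conv_nth)
      then have "k < t" using sl_less_iff[OF assms(1) assms(2) t(1)] y by simp
      then show "y \<in> (\<lambda>t. ?s ! t) ` {k<..<card S}" using t by auto
    qed
  next
    show "(\<lambda>t. ?s ! t) ` {k<..<card S} \<subseteq> {y\<in>S. ?s ! k < y}"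
    proof
      fix y assume "y \<in> (\<lambda>t. ?s ! t) ` {k<..<card S}"
      then obtain t where t: "k < t" "t < card S" "y = ?s ! t" by auto
      then have "y \<in> S" using t set nth_mem[of t ?s] by auto
      moreover have "?s ! k < y" using sl_less_iff[OF assms(1) assms(2) \<open>t < card S\<close>] t by simp
      ultimately show "y \<in> {y\<in>S. ?s ! k < y}" by simp
    qed
  qed
  have "inj_on (\<lambda>t. ?s ! t) {k<..<card S}"
    using assms by (auto simp: inj_on_def nth_eq_iff_index_eq)
  then show ?thesis unfolding eq by (simp add: card_image)
qed



definition goodE :: "(nat \<times> nat) set \<Rightarrow> bool" where
  "goodE E \<longleftrightarrow> (\<forall>a b. (a,b)\<in>E \<longrightarrow> a<b) \<and> (\<forall>a b b'. (a,b)\<in>E \<longrightarrow> (a,b')\<in>E \<longrightarrow> b=b')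
     \<and> (\<forall>a a' b. (a,b)\<in>E \<longrightarrow> (a',b)\<in>E \<longrightarrow> a=a')"

lemma goodE_rtrancl_le: assumes "goodE E" "(a,b)\<in>E\<^sup>*" shows "a \<le> b"
  using assms(2)
proof (induction rule: rtrancl_induct)
  case (step y z) then show ?case using assms(1) unfolding goodE_def by fastforce
qed simp

lemma goodE_sym_path:
  assumes g: "goodE E" and p: "(a,b) \<in> (E \<union> E\<inverse>)\<^sup>*"
  shows "(a,b)\<in>E\<^sup>* \<or> (b,a)\<in>E\<^sup>*"
  using p
proof (induction rule: rtrancl_induct)
  case base then show ?case by simp
next
  case (step c d)
  from step.hyps(2) have cd: "(c,d)\<in>E \<or> (d,c)\<in>E" by auto
  from step.IH show ?case
  proof
    assume ac: "(a,c)\<in>E\<^sup>*"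
    from cd show ?thesis
    proof
      assume "(c,d)\<in>E" then show ?thesis using ac by (meson rtrancl.rtrancl_into_rtrancl)
    next
      assume dc: "(d,c)\<in>E"
      show ?thesis
      proof (cases "a = c")
        case True then show ?thesis using dc by auto
      next
        case False
        then obtain c' where "(a,c')\<in>E\<^sup>*" "(c',c)\<in>E" using ac by (metis rtranclE)
        then have "c' = d" using dc g unfolding goodE_def by blast
        then show ?thesis using \<open>(a,c')\<in>E\<^sup>*\<close> by simp
      qed
    qed
  next
    assume ca: "(c,a)\<in>E\<^sup>*"
    from cd show ?thesis
    proof
      assume dc: "(d,c)\<in>E" then show ?thesis using ca by (meson converse_rtrancl_into_rtrancl)
    next
      assume cd': "(c,d)\<in>E"
      show ?thesis
      proof (cases "c = a")
        case True then show ?thesis using cd' by auto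
      next
        case False
        then obtain c' where "(c,c')\<in>E" "(c',a)\<in>E\<^sup>*" using ca by (metis converse_rtranclE)
        then have "c' = d" using cd' g unfolding goodE_def by blast
        then show ?thesis using \<open>(c',a)\<in>E\<^sup>*\<close> by simp
      qed
    qed
  qed
qed

lemma goodE_forward:
  assumes g: "goodE E" and p: "(a,b) \<in> (E \<union> E\<inverse>)\<^sup>*" and ab: "a < b"
  shows "\<exists>c. (a,c)\<in>E \<and> (c,b)\<in>E\<^sup>*"
proof -
  have "(a,b)\<in>E\<^sup>*" using goodE_sym_path[OF g p] goodE_rtrancl_le[OF g, of b a] ab by auto
  then show ?thesis using ab by (metis converse_rtranclE less_irrefl)
qed

lemma sym_R: "(x,y) \<in> (E \<union> E\<inverse>)\<^sup>* \<Longrightarrow> (y,x) \<in> (E \<union> E\<inverse>)\<^sup>*"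
proof -
  assume "(x,y) \<in> (E \<union> E\<inverse>)\<^sup>*"
  then have "(y,x) \<in> ((E \<union> E\<inverse>)\<inverse>)\<^sup>*" by (simp add: rtrancl_converse)
  moreover have "(E \<union> E\<inverse>)\<inverse> = E \<union> E\<inverse>" by auto
  ultimately show ?thesis by simp
qed

lemma edges_partition_of_edges:
  assumes g: "goodE E" and f: "\<And>a b. (a,b)\<in>E \<Longrightarrow> a \<in> {1..n}"
  shows "edges (partition_of_edges n E) = E"
proof
  let ?R = "(E \<union> E\<inverse>)\<^sup>*"
  show "edges (partition_of_edges n E) \<subseteq> E"
  proof
    fix p assume "p \<in> edges (partition_of_edges n E)"
    then obtain i j B where p: "p = (i,j)" and B: "B \<in> {1..n} // ?R" "i\<in>B" "j\<in>B" "i<j"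
      "\<forall>k\<in>B. \<not>(i<k \<and> k<j)"
      unfolding edges_def partition_of_edges_def by auto
    from B(1) obtain x where x: "B = ?R``{x}" by (auto elim: quotientE)
    have xi: "(x,i)\<in>?R" and xj: "(x,j)\<in>?R" using B x by auto
    have "(i,j)\<in>?R" using sym_R[OF xi] xj by (meson rtrancl_trans)
    then obtain c where c: "(i,c)\<in>E" "(c,j)\<in>E\<^sup>*" using goodE_forward[OF g _ B(4)] by blast
    have "c \<le> j" using goodE_rtrancl_le[OF g c(2)] .
    have "i < c" using c(1) g unfolding goodE_def by blast
    have "(x,c)\<in>?R" using xi c(1) by (meson UnI1 rtrancl.rtrancl_into_rtrancl)
    then have "c \<in> B" using x by auto
    then have "c = j" using B(5) \<open>i<c\<close> \<open>c\<le>j\<close> by force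
    then show "p \<in> E" using c p by simp
  qed
next
  let ?R = "(E \<union> E\<inverse>)\<^sup>*"
  show "E \<subseteq> edges (partition_of_edges n E)"
  proof
    fix p assume "p \<in> E"
    then obtain a b where p: "p = (a,b)" "(a,b)\<in>E" by (cases p) auto
    have ab: "a < b" using p g unfolding goodE_def by blast
    have B: "?R``{a} \<in> {1..n} // ?R" using f[OF p(2)] by (rule quotientI)
    have "a \<in> ?R``{a}" by auto
    moreover have "b \<in> ?R``{a}" using p(2) by auto
    moreover have "\<forall>k\<in>?R``{a}. \<not>(a<k \<and> k<b)"
    proof (intro ballI notI)
      fix k assume k: "k \<in> ?R``{a}" "a<k \<and> k<b"
      then obtain c where c: "(a,c)\<in>E" "(c,k)\<in>E\<^sup>*" using goodE_forward[OF g] by blast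
      then have "c = b" using p g unfolding goodE_def by blast
      then show False using goodE_rtrancl_le[OF g c(2)] k by simp
    qed
    ultimately show "p \<in> edges (partition_of_edges n E)"
      unfolding edges_def partition_of_edges_def using B ab p by blast
  qed
qed



lemma card2_iff:
  fixes B :: "nat set"
  assumes "finite B" "B \<noteq> {}"
  shows "2 \<le> card B \<longleftrightarrow> Min B \<noteq> Max B"
proof
  assume c: "2 \<le> card B"
  show "Min B \<noteq> Max B"
  proof
    assume e: "Min B = Max B"
    have "B \<subseteq> {Min B}" using assms e by (auto, metis Max_ge Min_le antisym)
    then have "card B \<le> card {Min B}" by (intro card_mono) auto
    then have "card B \<le> 1" by simp
    then show False using c by simp
  qed
next
  assume "Min B \<noteq> Max B"
  moreover have "{Min B, Max B} \<subseteq> B" using assms by auto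
  ultimately show "2 \<le> card B" using assms(1) by (metis card_2_iff card_mono)
qed

lemma part_basic:
  assumes "partition_on {1..(n::nat)} P" "B \<in> P"
  shows "finite B" "B \<noteq> {}" "B \<subseteq> {1..n}"
proof -
  have "B \<subseteq> {1..n}" using assms unfolding partition_on_def by blast
  then show "finite B" "B \<subseteq> {1..n}" using finite_subset by auto
  show "B \<noteq> {}" using assms unfolding partition_on_def by blast
qed

lemma part_unique:
  assumes "partition_on {1..(n::nat)} P" "B \<in> P" "B' \<in> P" "x \<in> B" "x \<in> B'"
  shows "B = B'"
  using assms unfolding partition_on_def by (meson disjointD disjoint_iff)

lemma part_cover:
  assumes "partition_on {1..(n::nat)} P" "x \<in> {1..n}"
  obtains B where "B \<in> P" "x \<in> B"
  using assms unfolding partition_on_def by (metis Union_iff)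

lemma edgesP_range:
  assumes "partition_on {1..(n::nat)} P" "(a,b) \<in> edges P"
  shows "a \<in> {1..n}" "b \<in> {1..n}" "a < b"
  using assms part_basic[OF assms(1)] unfolding edges_def by blast+

lemma edgesP_block:
  assumes "partition_on {1..(n::nat)} P" "(a,b) \<in> edges P" "B \<in> P" "a \<in> B \<or> b \<in> B"
  shows "a \<in> B" "b \<in> B" "\<forall>k\<in>B. \<not>(a<k \<and> k<b)"
proof -
  obtain B' where B': "B'\<in>P" "a\<in>B'" "b\<in>B'" "a<b" "\<forall>k\<in>B'. \<not>(a<k \<and> k<b)"
    using assms(2) unfolding edges_def by blast
  have "B' = B" using part_unique[OF assms(1) B'(1) assms(3)] B' assms(4) by blast
  then show "a \<in> B" "b \<in> B" "\<forall>k\<in>B. \<not>(a<k \<and> k<b)" using B' by auto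
qed

lemma edgesP_good:
  assumes "partition_on {1..(n::nat)} P"
  shows "goodE (edges P)"
  unfolding goodE_def
proof (intro conjI allI impI)
  fix a b assume "(a,b) \<in> edges P" then show "a < b" using edgesP_range[OF assms] by blast
next
  fix a b b' assume ab: "(a,b) \<in> edges P" and ab': "(a,b') \<in> edges P"
  obtain B where B: "B\<in>P" "a\<in>B" using ab unfolding edges_def by blast
  note h1 = edgesP_block[OF assms ab B(1)] and h2 = edgesP_block[OF assms ab' B(1)]
  have "a<b" "a<b'" using edgesP_range[OF assms] ab ab' by blast+
  then show "b = b'" using h1 h2 B(2) by (meson linorder_neqE_nat)
next
  fix a a' b assume ab: "(a,b) \<in> edges P" and ab': "(a',b) \<in> edges P"
  obtain B where B: "B\<in>P" "b\<in>B" using ab unfolding edges_def by blast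
  note h1 = edgesP_block[OF assms ab B(1)] and h2 = edgesP_block[OF assms ab' B(1)]
  have "a<b" "a'<b" using edgesP_range[OF assms] ab ab' by blast+
  then show "a = a'" using h1 h2 B(2) by (meson linorder_neqE_nat)
qed

lemma range_iff_block:
  assumes p: "partition_on {1..(n::nat)} P" and B: "B \<in> P" "m \<in> B"
  shows "m \<in> Range (edges P) \<longleftrightarrow> m \<noteq> Min B"
proof
  assume "m \<in> Range (edges P)"
  then obtain a where a: "(a,m) \<in> edges P" by auto
  have "a \<in> B" using edgesP_block[OF p a B(1)] B by blast
  moreover have "a < m" using edgesP_range[OF p a] by blast
  ultimately show "m \<noteq> Min B" using part_basic[OF p B(1)] by (metis Min_le not_le)
next
  assume ne: "m \<noteq> Min B"
  have fB: "finite B" "B \<noteq> {}" using part_basic[OF p B(1)] by auto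
  let ?S = "{k\<in>B. k<m}"
  have "Min B \<in> ?S" using fB ne B(2) by (simp add: le_neq_implies_less)
  then have S: "finite ?S" "?S \<noteq> {}" using fB(1) by (simp, blast)
  let ?a = "Max ?S"
  have a: "?a \<in> B" "?a < m" using Max_in[OF S] by auto
  have "\<forall>k\<in>B. \<not>(?a<k \<and> k<m)" using Max_ge[OF S(1)] by (auto simp: not_less)
  then have "(?a, m) \<in> edges P" unfolding edges_def using B a by blast
  then show "m \<in> Range (edges P)" by auto
qed

lemma domain_iff_block:
  assumes p: "partition_on {1..(n::nat)} P" and B: "B \<in> P" "m \<in> B"
  shows "m \<in> Domain (edges P) \<longleftrightarrow> m \<noteq> Max B"
proof
  assume "m \<in> Domain (edges P)"
  then obtain b where a: "(m,b) \<in> edges P" by auto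
  have "b \<in> B" using edgesP_block[OF p a B(1)] B by blast
  moreover have "m < b" using edgesP_range[OF p a] by blast
  ultimately show "m \<noteq> Max B" using part_basic[OF p B(1)] by (metis Max_ge not_le)
next
  assume ne: "m \<noteq> Max B"
  have fB: "finite B" "B \<noteq> {}" using part_basic[OF p B(1)] by auto
  let ?S = "{k\<in>B. m<k}"
  have "Max B \<in> ?S" using fB ne B(2) by (simp add: le_neq_implies_less)
  then have S: "finite ?S" "?S \<noteq> {}" using fB(1) by (simp, blast)
  let ?a = "Min ?S"
  have a: "?a \<in> B" "m < ?a" using Min_in[OF S] by auto
  have "\<forall>k\<in>B. \<not>(m<k \<and> k<?a)"
  proof (intro ballI notI)
    fix k assume k: "k\<in>B" "m<k \<and> k<?a"
    then have "?a \<le> k" using Min_le[OF S(1)] by blast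
    then show False using k by simp
  qed
  then have "(m, ?a) \<in> edges P" unfolding edges_def using B a by blast
  then show "m \<in> Domain (edges P)" by auto
qed

lemma in_some_block:
  assumes p: "partition_on {1..(n::nat)} P" and m: "m \<in> Domain (edges P) \<or> m \<in> Range (edges P)"
  obtains B where "B \<in> P" "m \<in> B"
proof -
  have "m \<in> {1..n}" using m edgesP_range[OF p] by blast
  then show ?thesis using part_cover[OF p] that by blast
qed

lemma opener_iff:
  assumes p: "partition_on {1..(n::nat)} P"
  shows "opener P m \<longleftrightarrow> m \<in> Domain (edges P) \<and> m \<notin> Range (edges P)"
proof
  assume "opener P m"
  then obtain B where B: "B\<in>P" "2 \<le> card B" "m = Min B" unfolding opener_def by blast
  have fB: "finite B" "B \<noteq> {}" using part_basic[OF p B(1)] by auto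
  have "m \<in> B" using B fB by simp
  then show "m \<in> Domain (edges P) \<and> m \<notin> Range (edges P)"
    using range_iff_block[OF p B(1)] domain_iff_block[OF p B(1)] card2_iff[OF fB] B by auto
next
  assume m: "m \<in> Domain (edges P) \<and> m \<notin> Range (edges P)"
  then obtain B where B: "B \<in> P" "m \<in> B" using in_some_block[OF p] by blast
  have fB: "finite B" "B \<noteq> {}" using part_basic[OF p B(1)] by auto
  show "opener P m" unfolding opener_def
    using range_iff_block[OF p B] domain_iff_block[OF p B] card2_iff[OF fB] B m by auto
qed

lemma rt_iff:
  assumes p: "partition_on {1..(n::nat)} P"
  shows "closer P m \<or> transient P m \<longleftrightarrow> m \<in> Range (edges P)"
proof
  assume "closer P m \<or> transient P m"
  then obtain B where B: "B\<in>P" "2 \<le> card B" "m \<in> B" "m \<noteq> Min B"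
  proof (cases "closer P m")
    case True
    then obtain B where B: "B\<in>P" "2 \<le> card B" "m = Max B" unfolding closer_def by blast
    have fB: "finite B" "B \<noteq> {}" using part_basic[OF p B(1)] by auto
    then show ?thesis using that[of B] B card2_iff[OF fB] by auto
  next
    case False
    then show ?thesis using that \<open>closer P m \<or> transient P m\<close> unfolding transient_def by blast
  qed
  then show "m \<in> Range (edges P)" using range_iff_block[OF p B(1) B(3)] by simp
next
  assume m: "m \<in> Range (edges P)"
  then obtain B where B: "B \<in> P" "m \<in> B" using in_some_block[OF p] by blast
  have fB: "finite B" "B \<noteq> {}" using part_basic[OF p B(1)] by auto
  have ne: "m \<noteq> Min B" using range_iff_block[OF p B] m by simp
  have "Min B \<in> B" using fB by simp
  then have c: "2 \<le> card B" using card2_iff[OF fB] ne B(2) fB by (metis Max_ge Min_le antisym)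
  show "closer P m \<or> transient P m"
    unfolding closer_def transient_def using B ne c by blast
qed

lemma transient_iff:
  assumes p: "partition_on {1..(n::nat)} P"
  shows "transient P m \<longleftrightarrow> m \<in> Domain (edges P) \<and> m \<in> Range (edges P)"
proof
  assume "transient P m"
  then obtain B where B: "B\<in>P" "m \<in> B" "m \<noteq> Min B" "m \<noteq> Max B" unfolding transient_def by blast
  then show "m \<in> Domain (edges P) \<and> m \<in> Range (edges P)"
    using range_iff_block[OF p B(1,2)] domain_iff_block[OF p B(1,2)] by simp
next
  assume m: "m \<in> Domain (edges P) \<and> m \<in> Range (edges P)"
  then obtain B where B: "B \<in> P" "m \<in> B" using in_some_block[OF p] by blast
  have fB: "finite B" "B \<noteq> {}" using part_basic[OF p B(1)] by auto
  have ne: "m \<noteq> Min B" "m \<noteq> Max B" using range_iff_block[OF p B] domain_iff_block[OF p B] m by auto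
  have "Min B \<le> m" "m \<le> Max B" using fB B(2) by auto
  then have c: "2 \<le> card B" using card2_iff[OF fB] ne by auto
  show "transient P m" unfolding transient_def using B ne c by blast
qed



abbreviation Vs where "Vs P i \<equiv> fst (phi_state P i)"
abbreviation Es where "Es P i \<equiv> snd (phi_state P i)"
definition xsel where "xsel P i = rev (sorted_list_of_set (Vs P i)) ! (gamma P (Suc i) - 1)"

lemma step_open: "opener P (Suc i) \<Longrightarrow> phi_state P (Suc i) = (insert (Suc i) (Vs P i), Es P i)"
  by (cases "phi_state P i") (simp add: Let_def)

lemma step_rt: "\<not> opener P (Suc i) \<Longrightarrow> closer P (Suc i) \<or> transient P (Suc i) \<Longrightarrow>
  phi_state P (Suc i) = (if transient P (Suc i) then insert (Suc i) (Vs P i - {xsel P i}) else Vs P i - {xsel P i},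
     insert (xsel P i, Suc i) (Es P i))"
  by (cases "phi_state P i") (simp add: Let_def xsel_def)

lemma step_none: "\<not> opener P (Suc i) \<Longrightarrow> \<not>(closer P (Suc i) \<or> transient P (Suc i)) \<Longrightarrow>
  phi_state P (Suc i) = phi_state P i"
  by (cases "phi_state P i") (simp add: Let_def)

lemma Es_step: "Es P (Suc i) = Es P i \<or> Es P (Suc i) = insert (xsel P i, Suc i) (Es P i)"
  by (metis step_open step_rt step_none snd_conv)

lemma Es_bound: "p \<in> Es P i \<Longrightarrow> snd p \<le> i"
proof (induction i)
  case 0 then show ?case by simp
next
  case (Suc i) then show ?case using Es_step[of P i] by fastforce
qed

lemma Es_restrict: "k \<le> i \<Longrightarrow> Es P k = {p \<in> Es P i. snd p \<le> k}"
proof (induction i)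
  case 0 then show ?case using Es_bound[of _ P 0] by auto
next
  case (Suc i)
  show ?case
  proof (cases "k = Suc i")
    case True then show ?thesis using Es_bound[of _ P "Suc i"] by auto
  next
    case False
    then have "k \<le> i" using Suc by simp
    then show ?thesis using Suc.IH Es_step[of P i] by auto
  qed
qed

lemma vacant_finite: "finite (vacant P m)"
  by (rule finite_subset[of _ "{..m}"]) (auto simp: vacant_def)

lemma vacant_Suc:
  assumes g: "goodE (edges P)" and m: "1 \<le> m"
  shows "vacant P (Suc m) = (vacant P m - {a. (a,m) \<in> edges P}) \<union> {x. x = m \<and> m \<in> Domain (edges P)}"
proof -
  have lt: "\<And>a b. (a,b) \<in> edges P \<Longrightarrow> a < b" and fo: "\<And>a b b'. (a,b) \<in> edges P \<Longrightarrow> (a,b') \<in> edges P \<Longrightarrow> b = b'"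
    using g unfolding goodE_def by blast+
  show ?thesis
  proof (intro set_eqI iffI)
    fix x assume "x \<in> vacant P (Suc m)"
    then obtain y where xy: "x \<le> m" "(x,y) \<in> edges P" "y \<ge> Suc m" unfolding vacant_def by auto
    show "x \<in> (vacant P m - {a. (a,m) \<in> edges P}) \<union> {x. x = m \<and> m \<in> Domain (edges P)}"
    proof (cases "x = m")
      case True then show ?thesis using xy by auto
    next
      case False
      then have "x \<le> m - 1" using xy by simp
      moreover have "(x,m) \<notin> edges P" using fo[OF xy(2)] xy(3) by fastforce
      ultimately show ?thesis using xy unfolding vacant_def by auto
    qed
  next
    fix x assume "x \<in> (vacant P m - {a. (a,m) \<in> edges P}) \<union> {x. x = m \<and> m \<in> Domain (edges P)}"
    then show "x \<in> vacant P (Suc m)"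
    proof
      assume x: "x \<in> vacant P m - {a. (a,m) \<in> edges P}"
      then obtain y where xy: "x \<le> m - 1" "(x,y) \<in> edges P" "y \<ge> m" "(x,m) \<notin> edges P" unfolding vacant_def by auto
      then have "y \<noteq> m" by auto
      then show ?thesis using xy unfolding vacant_def by auto
    next
      assume "x \<in> {x. x = m \<and> m \<in> Domain (edges P)}"
      then obtain y where "x = m" "(m,y) \<in> edges P" by auto
      then show ?thesis using lt[of m y] unfolding vacant_def by auto
    qed
  qed
qed

lemma gamma_props:
  assumes g: "goodE (edges P)" and a: "(a,m) \<in> edges P"
  shows "1 \<le> gamma P m" "gamma P m \<le> card (vacant P m)"
        "sorted_list_of_set (vacant P m) ! (gamma P m - 1) = a" "left_end P m = a"
proof -
  have lt: "a < m" using g a unfolding goodE_def by blast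
  have fi: "\<And>a'. (a',m) \<in> edges P \<Longrightarrow> a' = a" using g a unfolding goodE_def by blast
  show le: "left_end P m = a" unfolding left_end_def using a fi by (rule the_equality)
  let ?s = "sorted_list_of_set (vacant P m)"
  have "a \<in> vacant P m" using a lt unfolding vacant_def by auto
  then have "a \<in> set ?s" using vacant_finite by simp
  then obtain k where k: "k < length ?s" "?s ! k = a" by (auto simp: in_set_conv_nth)
  have len: "length ?s = card (vacant P m)" by simp
  have P1: "1 \<le> Suc k \<and> Suc k \<le> card (vacant P m) \<and> ?s ! (Suc k - 1) = left_end P m"
    using k len le by simp
  have "gamma P m = Suc k" unfolding gamma_def
  proof (rule the_equality)
    show "1 \<le> Suc k \<and> Suc k \<le> card (vacant P m) \<and> ?s ! (Suc k - 1) = left_end P m" by (rule P1)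
  next
    fix r assume r: "1 \<le> r \<and> r \<le> card (vacant P m) \<and> ?s ! (r - 1) = left_end P m"
    then have "?s ! (r - 1) = ?s ! k" "r - 1 < length ?s" using k le len by auto
    then have "r - 1 = k" using k distinct_sorted_list_of_set nth_eq_iff_index_eq by blast
    then show "r = Suc k" using r by linarith
  qed
  then show "1 \<le> gamma P m" "gamma P m \<le> card (vacant P m)"
        "?s ! (gamma P m - 1) = a" using k len by auto
qed



lemma goodE_insert:
  assumes "goodE E" "a < b" "a \<notin> Domain E" "b \<notin> Range E"
  shows "goodE (insert (a,b) E)"
  using assms unfolding goodE_def by (auto simp: Domain_iff Range_iff)

definition Inv where
  "Inv P i \<longleftrightarrow> finite (Vs P i) \<and>
     Vs P i = {x. 1 \<le> x \<and> x \<le> i \<and> x \<in> Domain (edges P)} - Domain (Es P i) \<and>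
     card (Vs P i) = card (vacant P (Suc i)) \<and> goodE (Es P i) \<and>
     Range (Es P i) = {m. 1 \<le> m \<and> m \<le> i \<and> m \<in> Range (edges P)} \<and>
     (\<forall>a b. (a,b) \<in> Es P i \<longrightarrow> 1 \<le> a) \<and>
     Domain (Es P i) \<subseteq> {x. 1 \<le> x \<and> x \<le> i \<and> x \<in> Domain (edges P)}"

lemma Es_dom_bound:
  assumes "goodE (Es P i)" "(a,b) \<in> Es P i" shows "a < i"
proof -
  have "a < b" using assms unfolding goodE_def by blast
  moreover have "b \<le> i" using Es_bound[OF assms(2)] by simp
  ultimately show ?thesis by simp
qed

lemma Inv_0:
  assumes p: "partition_on {1..(n::nat)} P" shows "Inv P 0"
proof -
  have "vacant P 1 = {}" unfolding vacant_def using edgesP_range[OF p] by fastforce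
  then show ?thesis unfolding Inv_def goodE_def by simp
qed

lemma Inv_Suc:
  assumes p: "partition_on {1..(n::nat)} P" and I: "Inv P i"
  shows "Inv P (Suc i)"
proof -
  let ?m = "Suc i"
  let ?D = "Domain (edges P)" and ?R = "Range (edges P)"
  let ?V = "Vs P i" and ?E = "Es P i"
  have g: "goodE (edges P)" using edgesP_good[OF p] .
  have fV: "finite ?V" and V: "?V = {x. 1 \<le> x \<and> x \<le> i \<and> x \<in> ?D} - Domain ?E"
   and cV: "card ?V = card (vacant P ?m)" and gE: "goodE ?E"
   and RE: "Range ?E = {m. 1 \<le> m \<and> m \<le> i \<and> m \<in> ?R}"
   and one: "\<forall>a b. (a,b) \<in> ?E \<longrightarrow> 1 \<le> a"
   and DE: "Domain ?E \<subseteq> {x. 1 \<le> x \<and> x \<le> i \<and> x \<in> ?D}" using I unfolding Inv_def by blast+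
  have mV: "?m \<notin> ?V" using V by auto
  have mDE: "?m \<notin> Domain ?E" using Es_dom_bound[OF gE] by fastforce
  have mRE: "?m \<notin> Range ?E" using RE by auto
  have mvac: "?m \<notin> vacant P ?m" unfolding vacant_def by simp
  have vs: "vacant P (Suc ?m) = (vacant P ?m - {a. (a,?m) \<in> edges P}) \<union> {x. x = ?m \<and> ?m \<in> ?D}"
    using vacant_Suc[OF g] by simp
  show ?thesis
  proof (cases "opener P ?m")
    case True
    then have mD: "?m \<in> ?D" and mR: "?m \<notin> ?R" using opener_iff[OF p] by auto
    have ph: "phi_state P ?m = (insert ?m ?V, ?E)" using step_open[OF True] .
    have vs': "vacant P (Suc ?m) = insert ?m (vacant P ?m)" using vs mD mR by auto
    show ?thesis unfolding Inv_def ph fst_conv snd_conv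
    proof (intro conjI)
      show "finite (insert ?m ?V)" using fV by simp
      show "insert ?m ?V = {x. 1 \<le> x \<and> x \<le> ?m \<and> x \<in> ?D} - Domain ?E"
        using V mD mDE by auto
      show "card (insert ?m ?V) = card (vacant P (Suc ?m))"
        using vs' mvac mV fV cV vacant_finite by simp
      show "goodE ?E" by (rule gE)
      show "Range ?E = {m. 1 \<le> m \<and> m \<le> ?m \<and> m \<in> ?R}" using RE mR le_Suc_eq by auto
    qed (use one DE in auto)
  next
    case nop: False
    show ?thesis
    proof (cases "?m \<in> ?R")
      case mR: True
      then have rt: "closer P ?m \<or> transient P ?m" using rt_iff[OF p] by blast
      have tr: "transient P ?m \<longleftrightarrow> ?m \<in> ?D" using transient_iff[OF p] mR by blast
      obtain a where a: "(a, ?m) \<in> edges P" using mR by auto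
      note gp = gamma_props[OF g a]
      let ?x = "xsel P i"
      let ?s = "sorted_list_of_set ?V"
      have "gamma P ?m - 1 < length (rev ?s)" using gp cV fV by simp
      then have "?x \<in> set (rev ?s)" unfolding xsel_def by (rule nth_mem)
      then have xV: "?x \<in> ?V" using fV by simp
      then have x: "1 \<le> ?x" "?x \<le> i" "?x \<in> ?D" "?x \<notin> Domain ?E" using V by auto
      have ph: "phi_state P ?m = (if ?m \<in> ?D then insert ?m (?V - {?x}) else ?V - {?x},
          insert (?x, ?m) ?E)" using step_rt[OF nop rt] tr by simp
      have avac: "a \<in> vacant P ?m" using a edgesP_range[OF p a] unfolding vacant_def by auto
      have vs': "vacant P (Suc ?m) = (if ?m \<in> ?D then insert ?m (vacant P ?m - {a}) else vacant P ?m - {a})"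
      proof -
        have "{a'. (a', ?m) \<in> edges P} = {a}" using a g unfolding goodE_def by blast
        then show ?thesis using vs by auto
      qed
      have cvac: "card (vacant P ?m - {a}) = card (vacant P ?m) - 1" using avac vacant_finite by simp
      have cV': "card (?V - {?x}) = card ?V - 1" using xV fV by simp
      show ?thesis unfolding Inv_def ph fst_conv snd_conv
      proof (intro conjI)
        show "finite (if ?m \<in> ?D then insert ?m (?V - {?x}) else ?V - {?x})" using fV by simp
        show "(if ?m \<in> ?D then insert ?m (?V - {?x}) else ?V - {?x}) =
          {x. 1 \<le> x \<and> x \<le> ?m \<and> x \<in> ?D} - Domain (insert (?x, ?m) ?E)"
          using V mDE x by (auto simp: le_Suc_eq)
        show "card (if ?m \<in> ?D then insert ?m (?V - {?x}) else ?V - {?x}) = card (vacant P (Suc ?m))"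
          using vs' cvac cV' cV mV mvac fV vacant_finite by (simp add: card_insert_if)
        show "goodE (insert (?x, ?m) ?E)" using goodE_insert[OF gE _ x(4) mRE] x by simp
        show "Range (insert (?x, ?m) ?E) = {m. 1 \<le> m \<and> m \<le> ?m \<and> m \<in> ?R}"
          using RE mR by (auto simp: le_Suc_eq)
        show "\<forall>a b. (a, b) \<in> insert (?x, ?m) ?E \<longrightarrow> 1 \<le> a" using one x by auto
        show "Domain (insert (?x, ?m) ?E) \<subseteq> {x. 1 \<le> x \<and> x \<le> ?m \<and> x \<in> ?D}" using DE x by auto
      qed
    next
      case mR: False
      then have rt: "\<not>(closer P ?m \<or> transient P ?m)" using rt_iff[OF p] by blast
      have mD: "?m \<notin> ?D" using opener_iff[OF p] nop mR by blast
      have ph: "phi_state P ?m = phi_state P i" using step_none[OF nop rt] .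
      have vs': "vacant P (Suc ?m) = vacant P ?m"
      proof -
        have "{a'. (a', ?m) \<in> edges P} = {}" using mR by auto
        then show ?thesis using vs mD by auto
      qed
      show ?thesis unfolding Inv_def ph
      proof (intro conjI)
        show "?V = {x. 1 \<le> x \<and> x \<le> ?m \<and> x \<in> ?D} - Domain ?E" using V mD by (auto simp: le_Suc_eq)
        show "card ?V = card (vacant P (Suc ?m))" using cV vs' by simp
        show "Range ?E = {m. 1 \<le> m \<and> m \<le> ?m \<and> m \<in> ?R}" using RE mR by (auto simp: le_Suc_eq)
      qed (use fV gE one DE in auto)
    qed
  qed
qed

lemma Inv_all: "partition_on {1..(n::nat)} P \<Longrightarrow> Inv P i"
  by (induction i) (auto intro: Inv_0 Inv_Suc)



definition crE :: "(nat \<times> nat) set \<Rightarrow> nat \<Rightarrow> nat" where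
  "crE E j = card {((i1, j1), (i2, j2)). (i1, j1) \<in> E \<and> (i2, j2) \<in> E \<and>
      j1 = j \<and> i1 < i2 \<and> i2 < j1 \<and> j1 < j2}"
definition neE :: "(nat \<times> nat) set \<Rightarrow> nat \<Rightarrow> nat" where
  "neE E j = card {((i1, j1), (i2, j2)). (i1, j1) \<in> E \<and> (i2, j2) \<in> E \<and>
      j2 = j \<and> i1 < i2 \<and> i2 < j2 \<and> j2 < j1}"
definition alE :: "(nat \<times> nat) set \<Rightarrow> nat \<Rightarrow> nat" where
  "alE E j = card {((i1, j1), (i2, j2)). (i1, j1) \<in> E \<and> (i2, j2) \<in> E \<and>
      j1 = j \<and> i1 < j1 \<and> j1 \<le> i2 \<and> i2 < j2}"
definition vacE :: "(nat \<times> nat) set \<Rightarrow> nat \<Rightarrow> nat set" where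
  "vacE E i = {x. x \<le> i - 1 \<and> (\<exists>y. (x, y) \<in> E \<and> y \<ge> i)}"

lemma cr_E: "cr P j = crE (edges P) j" unfolding cr_def crE_def ..
lemma ne_E: "ne P j = neE (edges P) j" unfolding ne_def neE_def ..
lemma al_E: "al P j = alE (edges P) j" unfolding al_def alE_def ..
lemma vac_E: "vacant P j = vacE (edges P) j" unfolding vacant_def vacE_def ..

lemma card_fst:
  assumes g: "goodE E" and S: "S \<subseteq> E"
  shows "card S = card (fst ` S)"
proof -
  have "inj_on fst S" using g S unfolding goodE_def inj_on_def by fastforce
  then show ?thesis by (simp add: card_image)
qed

lemma count_lemma:
  assumes g: "goodE E" and ij: "(i,j) \<in> E"
  shows "crE E j = card {x \<in> vacE E j. i < x}"
    "neE E j = card {x \<in> vacE E j. x < i}"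
    "alE E j = card {a \<in> Domain E. j \<le> a}"
proof -
  have lt: "\<And>a b. (a,b) \<in> E \<Longrightarrow> a < b" and fi: "\<And>a a' b. (a,b) \<in> E \<Longrightarrow> (a',b) \<in> E \<Longrightarrow> a = a'"
   and fo: "\<And>a b b'. (a,b) \<in> E \<Longrightarrow> (a,b') \<in> E \<Longrightarrow> b = b'"
    using g unfolding goodE_def by blast+
  have ij': "i < j" using lt[OF ij] .
  let ?S1 = "{(a,b). (a,b) \<in> E \<and> i < a \<and> a < j \<and> j < b}"
  have "{((i1, j1), (i2, j2)). (i1, j1) \<in> E \<and> (i2, j2) \<in> E \<and> j1 = j \<and> i1 < i2 \<and> i2 < j1 \<and> j1 < j2}
      = (\<lambda>p. ((i,j),p)) ` ?S1" (is "?L = _")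
  proof (intro set_eqI iffI)
    fix q assume "q \<in> ?L"
    then obtain i1 i2 j2 where q: "q = ((i1,j),(i2,j2))" "(i1,j)\<in>E" "(i2,j2)\<in>E" "i1<i2" "i2<j" "j<j2"
      by blast
    then have "i1 = i" using fi[OF ij] by blast
    then show "q \<in> (\<lambda>p. ((i,j),p)) ` ?S1" using q by (intro image_eqI[of _ _ "(i2,j2)"]) auto
  next
    fix q assume "q \<in> (\<lambda>p. ((i,j),p)) ` ?S1"
    then obtain a b where "q = ((i,j),(a,b))" "(a,b) \<in> ?S1" by blast
    then show "q \<in> ?L" using ij by blast
  qed
  then have "crE E j = card ?S1" unfolding crE_def by (simp add: card_image inj_on_def)
  also have "\<dots> = card (fst ` ?S1)" by (rule card_fst[OF g]) auto
  also have "fst ` ?S1 = {x \<in> vacE E j. i < x}"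
  proof (intro set_eqI iffI)
    fix x assume "x \<in> fst ` ?S1" then show "x \<in> {x \<in> vacE E j. i < x}"
      unfolding vacE_def by force
  next
    fix x assume "x \<in> {x \<in> vacE E j. i < x}"
    then obtain y where xy: "x \<le> j - 1" "(x,y) \<in> E" "y \<ge> j" "i < x" unfolding vacE_def by auto
    have "y \<noteq> j" using fi[OF ij, of x] xy by auto
    then have "(x,y) \<in> ?S1" using xy ij' by auto
    then show "x \<in> fst ` ?S1" by force
  qed
  finally show "crE E j = card {x \<in> vacE E j. i < x}" .
next
  have lt: "\<And>a b. (a,b) \<in> E \<Longrightarrow> a < b" and fi: "\<And>a a' b. (a,b) \<in> E \<Longrightarrow> (a',b) \<in> E \<Longrightarrow> a = a'"
   and fo: "\<And>a b b'. (a,b) \<in> E \<Longrightarrow> (a,b') \<in> E \<Longrightarrow> b = b'"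
    using g unfolding goodE_def by blast+
  have ij': "i < j" using lt[OF ij] .
  let ?S1 = "{(a,b). (a,b) \<in> E \<and> a < i \<and> j < b}"
  have "{((i1, j1), (i2, j2)). (i1, j1) \<in> E \<and> (i2, j2) \<in> E \<and> j2 = j \<and> i1 < i2 \<and> i2 < j2 \<and> j2 < j1}
      = (\<lambda>p. (p,(i,j))) ` ?S1" (is "?L = _")
  proof (intro set_eqI iffI)
    fix q assume "q \<in> ?L"
    then obtain i1 j1 i2 where q: "q = ((i1,j1),(i2,j))" "(i1,j1)\<in>E" "(i2,j)\<in>E" "i1<i2" "i2<j" "j<j1"
      by blast
    then have "i2 = i" using fi[OF ij] by blast
    then show "q \<in> (\<lambda>p. (p,(i,j))) ` ?S1" using q by (intro image_eqI[of _ _ "(i1,j1)"]) auto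
  next
    fix q assume "q \<in> (\<lambda>p. (p,(i,j))) ` ?S1"
    then obtain a b where "q = ((a,b),(i,j))" "(a,b) \<in> ?S1" by blast
    then show "q \<in> ?L" using ij ij' by blast
  qed
  then have "neE E j = card ?S1" unfolding neE_def by (simp add: card_image inj_on_def)
  also have "\<dots> = card (fst ` ?S1)" by (rule card_fst[OF g]) auto
  also have "fst ` ?S1 = {x \<in> vacE E j. x < i}"
  proof (intro set_eqI iffI)
    fix x assume "x \<in> fst ` ?S1" then show "x \<in> {x \<in> vacE E j. x < i}"
      unfolding vacE_def using ij' by force
  next
    fix x assume "x \<in> {x \<in> vacE E j. x < i}"
    then obtain y where xy: "x \<le> j - 1" "(x,y) \<in> E" "y \<ge> j" "x < i" unfolding vacE_def by auto
    have "y \<noteq> j" using fi[OF ij, of x] xy by auto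
    then have "(x,y) \<in> ?S1" using xy ij' by auto
    then show "x \<in> fst ` ?S1" by force
  qed
  finally show "neE E j = card {x \<in> vacE E j. x < i}" .
next
  have lt: "\<And>a b. (a,b) \<in> E \<Longrightarrow> a < b" and fi: "\<And>a a' b. (a,b) \<in> E \<Longrightarrow> (a',b) \<in> E \<Longrightarrow> a = a'"
    using g unfolding goodE_def by blast+
  have ij': "i < j" using lt[OF ij] .
  let ?S1 = "{(a,b). (a,b) \<in> E \<and> j \<le> a}"
  have "{((i1, j1), (i2, j2)). (i1, j1) \<in> E \<and> (i2, j2) \<in> E \<and> j1 = j \<and> i1 < j1 \<and> j1 \<le> i2 \<and> i2 < j2}
      = (\<lambda>p. ((i,j),p)) ` ?S1" (is "?L = _")
  proof (intro set_eqI iffI)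
    fix q assume "q \<in> ?L"
    then obtain i1 i2 j2 where q: "q = ((i1,j),(i2,j2))" "(i1,j)\<in>E" "(i2,j2)\<in>E" "j \<le> i2"
      by blast
    then have "i1 = i" using fi[OF ij] by blast
    then show "q \<in> (\<lambda>p. ((i,j),p)) ` ?S1" using q by (intro image_eqI[of _ _ "(i2,j2)"]) auto
  next
    fix q assume "q \<in> (\<lambda>p. ((i,j),p)) ` ?S1"
    then obtain a b where q: "q = ((i,j),(a,b))" "(a,b) \<in> ?S1" by blast
    then have "a < b" using lt by blast
    then show "q \<in> ?L" using ij ij' q by blast
  qed
  then have "alE E j = card ?S1" unfolding alE_def by (simp add: card_image inj_on_def)
  also have "\<dots> = card (fst ` ?S1)" by (rule card_fst[OF g]) auto
  also have "fst ` ?S1 = {a \<in> Domain E. j \<le> a}" by force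
  finally show "alE E j = card {a \<in> Domain E. j \<le> a}" .
qed



theorem lemma2p2:
  fixes n j :: nat and P :: "nat set set"
  assumes "n \<ge> 1" and "partition_on {1..n} P" and "closer P j \<or> transient P j"
  shows "al (phi n P) j = al P j \<and> cr (phi n P) j = ne P j \<and> ne (phi n P) j = cr P j"
proof -
  note p = assms(2)
  let ?D = "Domain (edges P)" and ?R = "Range (edges P)"
  let ?En = "Es P n"
  have g: "goodE (edges P)" using edgesP_good[OF p] .
  have In: "Inv P n" using Inv_all[OF p] .
  have fVn: "finite (Vs P n)" and Vn: "Vs P n = {x. 1 \<le> x \<and> x \<le> n \<and> x \<in> ?D} - Domain ?En"
   and cVn: "card (Vs P n) = card (vacant P (Suc n))" and gEn: "goodE ?En"
   and REn: "Range ?En = {m. 1 \<le> m \<and> m \<le> n \<and> m \<in> ?R}"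
   and oneEn: "\<forall>a b. (a,b) \<in> ?En \<longrightarrow> 1 \<le> a"
   and DEn: "Domain ?En \<subseteq> {x. 1 \<le> x \<and> x \<le> n \<and> x \<in> ?D}" using In unfolding Inv_def by blast+
  have "vacant P (Suc n) = {}" unfolding vacant_def using edgesP_range[OF p] by fastforce
  then have "Vs P n = {}" using cVn fVn by simp
  then have "{x. 1 \<le> x \<and> x \<le> n \<and> x \<in> ?D} \<subseteq> Domain ?En" using Vn by blast
  moreover have "?D \<subseteq> {x. 1 \<le> x \<and> x \<le> n \<and> x \<in> ?D}" using edgesP_range[OF p] by fastforce
  ultimately have domEn: "Domain ?En = ?D" using DEn by blast
  have bEn: "\<And>a b. (a,b) \<in> ?En \<Longrightarrow> a \<in> {1..n}"
  proof -
    fix a b assume ab: "(a,b) \<in> ?En"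
    have "a < b" using gEn ab unfolding goodE_def by blast
    moreover have "b \<le> n" using Es_bound[OF ab] by simp
    ultimately show "a \<in> {1..n}" using oneEn ab by auto
  qed
  have phiE: "edges (phi n P) = ?En" unfolding phi_def by (rule edges_partition_of_edges[OF gEn bEn])
  have jR: "j \<in> ?R" using rt_iff[OF p] assms(3) by blast
  then obtain a where a: "(a,j) \<in> edges P" by auto
  have j1: "1 \<le> j" "j \<le> n" using edgesP_range[OF p a] by auto
  define i0 where "i0 = j - 1"
  have j0: "j = Suc i0" using j1 unfolding i0_def by simp
  note gp = gamma_props[OF g a]
  let ?x = "xsel P i0"
  have nop: "\<not> opener P (Suc i0)" using opener_iff[OF p] jR j0 by blast
  have "Es P j = insert (?x, j) (Es P i0)" using step_rt[OF nop] assms(3) j0 by simp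
  moreover have "Es P j \<subseteq> ?En" using Es_restrict[OF j1(2), of P] by blast
  ultimately have xj: "(?x, j) \<in> ?En" by blast
  have I0: "Inv P i0" using Inv_all[OF p] .
  have fV: "finite (Vs P i0)" and V: "Vs P i0 = {x. 1 \<le> x \<and> x \<le> i0 \<and> x \<in> ?D} - Domain (Es P i0)"
   and cV: "card (Vs P i0) = card (vacant P j)" using I0 j0 unfolding Inv_def by blast+
  have r0: "Es P i0 = {p \<in> ?En. snd p \<le> i0}" using Es_restrict[of i0 n P] j0 j1 by simp
  have fo: "\<And>a b b'. (a,b) \<in> ?En \<Longrightarrow> (a,b') \<in> ?En \<Longrightarrow> b = b'" using gEn unfolding goodE_def by blast
  have vacEn: "vacE ?En j = Vs P i0"
  proof (intro set_eqI iffI)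
    fix y assume "y \<in> vacE ?En j"
    then obtain z where yz: "y \<le> i0" "(y,z) \<in> ?En" "z \<ge> j" unfolding vacE_def i0_def by auto
    have "y \<in> ?D" "1 \<le> y" using yz(2) domEn oneEn by auto
    moreover have "y \<notin> Domain (Es P i0)"
    proof
      assume "y \<in> Domain (Es P i0)"
      then obtain z' where "(y,z') \<in> Es P i0" by auto
      then have "(y,z') \<in> ?En" "z' \<le> i0" using r0 by auto
      then show False using fo[OF yz(2)] yz j0 by fastforce
    qed
    ultimately show "y \<in> Vs P i0" using V yz by auto
  next
    fix y assume "y \<in> Vs P i0"
    then have y: "1 \<le> y" "y \<le> i0" "y \<in> ?D" "y \<notin> Domain (Es P i0)" using V by auto
    then have "y \<in> Domain ?En" using domEn by simp
    then obtain z where z: "(y,z) \<in> ?En" by blast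
    have "\<not> z \<le> i0" using z y(4) r0 by auto
    then show "y \<in> vacE ?En j" using y z j0 unfolding vacE_def by auto
  qed
  define c where "c = card (vacant P j)"
  define \<gamma> where "\<gamma> = gamma P j"
  have \<gamma>: "1 \<le> \<gamma>" "\<gamma> \<le> c" "sorted_list_of_set (vacant P j) ! (\<gamma> - 1) = a"
    using gp unfolding \<gamma>_def c_def by auto
  have cV': "card (Vs P i0) = c" using cV c_def by simp
  have xeq: "?x = sorted_list_of_set (Vs P i0) ! (c - \<gamma>)"
  proof -
    have "\<gamma> - 1 < length (sorted_list_of_set (Vs P i0))" using \<gamma> cV' by simp
    then show ?thesis unfolding xsel_def using \<gamma> cV' j0 \<gamma>_def by (simp add: rev_nth Suc_diff_le)
  qed
  have k: "c - \<gamma> < card (Vs P i0)" "\<gamma> - 1 < card (vacant P j)" using \<gamma> cV' c_def by auto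
  have "al (phi n P) j = al P j"
    unfolding al_E phiE using count_lemma(3)[OF gEn xj] count_lemma(3)[OF g a] domEn by simp
  moreover have "cr (phi n P) j = ne P j"
  proof -
    have "cr (phi n P) j = card {y \<in> Vs P i0. sorted_list_of_set (Vs P i0) ! (c - \<gamma>) < y}"
      unfolding cr_E phiE count_lemma(1)[OF gEn xj] vacEn xeq ..
    also have "\<dots> = \<gamma> - 1" using rank_greater[OF fV k(1)] cV' \<gamma> by simp
    also have "\<gamma> - 1 = card {y \<in> vacant P j. y < sorted_list_of_set (vacant P j) ! (\<gamma> - 1)}"
      using rank_less[OF vacant_finite k(2)] by simp
    also have "\<dots> = ne P j" by (simp only: ne_E count_lemma(2)[OF g a] vac_E[symmetric] \<gamma>(3))
    finally show ?thesis .
  qed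
  moreover have "ne (phi n P) j = cr P j"
  proof -
    have "ne (phi n P) j = card {y \<in> Vs P i0. y < sorted_list_of_set (Vs P i0) ! (c - \<gamma>)}"
      unfolding ne_E phiE count_lemma(2)[OF gEn xj] vacEn xeq ..
    also have "\<dots> = c - \<gamma>" using rank_less[OF fV k(1)] by simp
    also have "c - \<gamma> = card {y \<in> vacant P j. sorted_list_of_set (vacant P j) ! (\<gamma> - 1) < y}"
      using rank_greater[OF vacant_finite k(2)] \<gamma> c_def by simp
    also have "\<dots> = cr P j" by (simp only: cr_E count_lemma(1)[OF g a] vac_E[symmetric] \<gamma>(3))
    finally show ?thesis .
  qed
  ultimately show ?thesis by blast
qed


end
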